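(* For every $d\ge2$ and every unitary $U\in\mathcal{U}(d)$, $H_2(U)<1-\frac{2}{d^2+1}$; that is, the upper bound $H_2(U)\le 1-\frac{2}{d^2+1}$ obtained from the maximal stabilizer entropy of the Choi state is not attained by any unitary.
   Context: Let $d=d_L^n$ with $d_L\ge2$, $n\ge1$. On $\mathbb{C}^{d_L}$ let $Z|k\rangle=\omega^k|k\rangle$, $X|k\rangle=|k+1\rangle$ (mod $d_L$), $\omega=e^{2\pi i/d_L}$, $\tau=-e^{i\pi/d_L}$, $D_{(a_1,a_2)}=\tau^{a_1a_2}X^{a_1}Z^{a_2}$, and for $\mathbf a=\mathbf a_1\oplus\cdots\oplus\mathbf a_n\in\mathbb{Z}_{d_L}^{2n}$ let $D_{\mathbf a}=D_{\mathbf a_1}\otimes\cdots\otimes D_{\mathbf a_n}$ acting on $\mathbb{C}^d$. The 2-Clifford entropy of a unitary $U$ on $\mathbb{C}^d$ is $H_2(U)=1-\frac{1}{d^6}\sum_{\mathbf a,\mathbf b}\big|\operatorname{tr}(D_{\mathbf a}^\dagger UD_{\mathbf b}U^\dagger)\big|^4$. *)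

theory Defs
  imports "HOL-Analysis.Analysis"
begin

text \<open>Square matrices of size d are represented as functions nat => nat => complex,
  only the entries with indices < d being relevant.\<close>

definition mmult :: "nat \<Rightarrow> (nat \<Rightarrow> nat \<Rightarrow> complex) \<Rightarrow> (nat \<Rightarrow> nat \<Rightarrow> complex) \<Rightarrow> nat \<Rightarrow> nat \<Rightarrow> complex" where
  "mmult d A B = (\<lambda>i j. \<Sum>k<d. A i k * B k j)"

definition madj :: "(nat \<Rightarrow> nat \<Rightarrow> complex) \<Rightarrow> nat \<Rightarrow> nat \<Rightarrow> complex" where
  "madj A = (\<lambda>i j. cnj (A j i))"

definition mtrace :: "nat \<Rightarrow> (nat \<Rightarrow> nat \<Rightarrow> complex) \<Rightarrow> complex" where
  "mtrace d A = (\<Sum>i<d. A i i)"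

definition unitary_mat :: "nat \<Rightarrow> (nat \<Rightarrow> nat \<Rightarrow> complex) \<Rightarrow> bool" where
  "unitary_mat d U \<longleftrightarrow>
     (\<forall>i<d. \<forall>j<d. mmult d (madj U) U i j = (if i = j then 1 else 0)) \<and>
     (\<forall>i<d. \<forall>j<d. mmult d U (madj U) i j = (if i = j then 1 else 0))"

definition omega :: "nat \<Rightarrow> complex" where
  "omega dL = exp (2 * pi * \<i> / of_nat dL)"

definition tau :: "nat \<Rightarrow> complex" where
  "tau dL = - exp (pi * \<i> / of_nat dL)"

text \<open>Single-qudit Weyl operator D_(a1,a2) = tau^(a1 a2) X^a1 Z^a2 on C^dL, with
  a1, a2 in {0..<dL}; entry (j,k) = <j| D |k>.  X^a1 Z^a2 |k> = omega^(a2 k) |k + a1 mod dL>.\<close>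
definition weyl1 :: "nat \<Rightarrow> nat \<times> nat \<Rightarrow> nat \<Rightarrow> nat \<Rightarrow> complex" where
  "weyl1 dL a j k =
     (if j = (k + fst a) mod dL then tau dL ^ (fst a * snd a) * omega dL ^ (snd a * k) else 0)"

text \<open>i-th tensor factor digit (i = 0 is the first / most significant factor) of a
  basis index j of C^(dL^n) = C^dL (x) ... (x) C^dL.\<close>
definition digit :: "nat \<Rightarrow> nat \<Rightarrow> nat \<Rightarrow> nat \<Rightarrow> nat" where
  "digit dL n i j = (j div dL ^ (n - 1 - i)) mod dL"

text \<open>D_a = D_(a_1) (x) ... (x) D_(a_n) for a = a_1 + ... + a_n in Z_dL^(2n),
  the latter represented as a list of n pairs.\<close>
definition weyl :: "nat \<Rightarrow> nat \<Rightarrow> (nat \<times> nat) list \<Rightarrow> nat \<Rightarrow> nat \<Rightarrow> complex" where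
  "weyl dL n a j k = (\<Prod>i<n. weyl1 dL (a ! i) (digit dL n i j) (digit dL n i k))"

definition weyl_labels :: "nat \<Rightarrow> nat \<Rightarrow> (nat \<times> nat) list set" where
  "weyl_labels dL n = {a. length a = n \<and> (\<forall>p\<in>set a. fst p < dL \<and> snd p < dL)}"

definition H2 :: "nat \<Rightarrow> nat \<Rightarrow> (nat \<Rightarrow> nat \<Rightarrow> complex) \<Rightarrow> real" where
  "H2 dL n U = (let d = dL ^ n in
     1 - (1 / real d ^ 6) *
       (\<Sum>a\<in>weyl_labels dL n. \<Sum>b\<in>weyl_labels dL n.
          cmod (mtrace d (mmult d (mmult d (mmult d (madj (weyl dL n a)) U) (weyl dL n b)) (madj U))) ^ 4))"

end

theory Submission
  imports Defs
begin

lemma omega_pow_dL: "dL \<ge> 1 \<Longrightarrow> omega dL ^ dL = 1"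
proof -
  assume h: "dL \<ge> 1"
  have "omega dL ^ dL = exp (of_nat dL * (2 * pi * \<i> / of_nat dL))"
    unfolding omega_def by (rule exp_of_nat_mult[symmetric])
  also have "\<dots> = 1" using h by simp
  finally show ?thesis .
qed

lemma omega_pow_eq_1: "dL \<ge> 1 \<Longrightarrow> (omega dL ^ j = 1) \<longleftrightarrow> dL dvd j"
proof -
  assume h: "dL \<ge> 1"
  have "omega dL ^ j = exp (2 * complex_of_real pi * \<i> * of_nat j / of_nat dL)"
    unfolding omega_def by (simp add: exp_of_nat_mult[symmetric] mult_ac)
  then show ?thesis using complex_root_unity_eq_1[OF h] by simp
qed

lemma cmod_omega: "cmod (omega dL) = 1"
  unfolding omega_def by (simp add: norm_exp_eq_Re)

lemma cmod_tau: "cmod (tau dL) = 1"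
  unfolding tau_def by (simp add: norm_exp_eq_Re)

lemma unit_cnj: "cmod z = 1 \<Longrightarrow> z * cnj z = 1"
  by (metis complex_norm_square mult.commute of_real_1 power_one)

lemma root_sum:
  assumes "dL \<ge> 1" "y < dL" "y' < dL"
  shows "(\<Sum>a2<dL. omega dL ^ (a2 * y) * cnj (omega dL ^ (a2 * y'))) = (if y = y' then of_nat dL else 0)"
proof -
  define z where "z = omega dL ^ y * cnj (omega dL ^ y')"
  have eq: "omega dL ^ (a2 * y) * cnj (omega dL ^ (a2 * y')) = z ^ a2" for a2
    unfolding z_def by (simp add: power_mult power_mult_distrib mult.commute[of a2])
  have u: "cmod (omega dL ^ m) = 1" for m by (simp add: norm_power cmod_omega)
  have seq: "(\<Sum>a2<dL. omega dL ^ (a2 * y) * cnj (omega dL ^ (a2 * y'))) = (\<Sum>a2<dL. z ^ a2)"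
    by (simp only: eq)
  have "(\<Sum>a2<dL. z ^ a2) = (if y = y' then of_nat dL else 0)"
  proof (cases "y = y'")
    case True
    then have "z = 1" unfolding z_def using unit_cnj[OF u] by simp
    then show ?thesis using True by simp
  next
    case False
    have zd: "z ^ dL = 1" unfolding z_def
      by (simp add: power_mult_distrib power_mult[symmetric] mult.commute[of _ dL]) 
         (simp add: power_mult omega_pow_dL[OF assms(1)] complex_cnj_power[symmetric] del: complex_cnj_power)
    have "z \<noteq> 1"
    proof
      assume "z = 1"
      then have "omega dL ^ y * (cnj (omega dL ^ y') * omega dL ^ y') = omega dL ^ y'"
        unfolding z_def by (simp add: mult.assoc[symmetric])
      moreover have c1: "cnj (omega dL ^ y') * omega dL ^ y' = 1"
        using unit_cnj[OF u, of y'] by (simp only: mult.commute)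
      ultimately have e: "omega dL ^ y = omega dL ^ y'" by (metis mult_1_right)
      have nz: "omega dL \<noteq> 0" using cmod_omega[of dL] by auto
      show False
      proof (cases "y < y'")
        case True
        have "omega dL ^ y * omega dL ^ (y' - y) = omega dL ^ y'"
          using True by (simp add: power_add[symmetric])
        then have "omega dL ^ y * omega dL ^ (y' - y) = omega dL ^ y * 1"
          using e by simp
        then have "omega dL ^ (y' - y) = 1" using nz by simp
        then have "dL dvd (y' - y)" using omega_pow_eq_1[OF assms(1)] by simp
        then show False using True assms by (meson diff_less dvd_imp_le le_less_trans less_irrefl zero_less_diff less_imp_diff_less)
      next
        case False
        then have lt: "y' < y" using \<open>y \<noteq> y'\<close> by simp
        have "omega dL ^ y' * omega dL ^ (y - y') = omega dL ^ y"
          using lt by (simp add: power_add[symmetric])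
        then have "omega dL ^ y' * omega dL ^ (y - y') = omega dL ^ y' * 1"
          using e by simp
        then have "omega dL ^ (y - y') = 1" using nz by simp
        then have "dL dvd (y - y')" using omega_pow_eq_1[OF assms(1)] by simp
        then show False using lt assms by (meson dvd_imp_le le_less_trans less_irrefl zero_less_diff less_imp_diff_less)
      qed
    qed
    then show ?thesis using False zd by (simp add: sum_gp_strict)
  qed
  then show ?thesis by (subst seq)
qed


lemma tau_pow_cnj: "tau dL ^ m * cnj (tau dL ^ m) = 1"
proof -
  have "cmod (tau dL ^ m) = 1" by (simp add: norm_power cmod_tau)
  then show ?thesis by (rule unit_cnj)
qed

lemma unique_shift:
  fixes dL x y :: nat
  assumes "dL \<ge> 1" "x < dL" "y < dL"
  shows "(\<Sum>a1<dL. (if x = (y + a1) mod dL then c else 0)) = (c::complex)"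
proof -
  define a0 where "a0 = (if y \<le> x then x - y else x + dL - y)"
  have a0: "a0 < dL" using assms unfolding a0_def by auto
  have iff: "a1 < dL \<Longrightarrow> (x = (y + a1) mod dL) \<longleftrightarrow> a1 = a0" for a1
  proof -
    assume a1: "a1 < dL"
    show ?thesis
    proof (cases "y \<le> x")
      case True
      then show ?thesis using assms a1 unfolding a0_def
        by (cases "y + a1 < dL") (auto simp: mod_if)
    next
      case False
      then show ?thesis using assms a1 unfolding a0_def
        by (cases "y + a1 < dL") (auto simp: mod_if)
    qed
  qed
  have "(\<Sum>a1<dL. (if x = (y + a1) mod dL then c else 0)) = (\<Sum>a1<dL. (if a1 = a0 then c else 0))"
    by (rule sum.cong) (auto simp: iff)
  also have "\<dots> = c" using a0 by simp
  finally show ?thesis .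
qed

lemma weyl1_complete:
  assumes "dL \<ge> 1" "x < dL" "y < dL" "x' < dL" "y' < dL"
  shows "(\<Sum>p\<in>{..<dL}\<times>{..<dL}. weyl1 dL p x y * cnj (weyl1 dL p x' y'))
         = (if x = x' \<and> y = y' then of_nat dL else 0)"
proof -
  have inner: "(\<Sum>a2<dL. weyl1 dL (a1, a2) x y * cnj (weyl1 dL (a1, a2) x' y'))
     = (if x = (y + a1) mod dL \<and> x' = (y' + a1) mod dL then (if y = y' then of_nat dL else 0) else 0)"
    for a1
  proof (cases "x = (y + a1) mod dL \<and> x' = (y' + a1) mod dL")
    case True
    have "(\<Sum>a2<dL. weyl1 dL (a1, a2) x y * cnj (weyl1 dL (a1, a2) x' y'))
       = (\<Sum>a2<dL. (tau dL ^ (a1 * a2) * cnj (tau dL ^ (a1 * a2))) *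
               (omega dL ^ (a2 * y) * cnj (omega dL ^ (a2 * y'))))"
      using True unfolding weyl1_def by (intro sum.cong) (auto simp: mult_ac)
    also have "\<dots> = (\<Sum>a2<dL. omega dL ^ (a2 * y) * cnj (omega dL ^ (a2 * y')))"
      by (simp only: tau_pow_cnj mult_1_left)
    also have "\<dots> = (if y = y' then of_nat dL else 0)" by (rule root_sum[OF assms(1,3,5)])
    finally show ?thesis using True by simp
  next
    case False
    then show ?thesis unfolding weyl1_def by auto
  qed
  have "(\<Sum>p\<in>{..<dL}\<times>{..<dL}. weyl1 dL p x y * cnj (weyl1 dL p x' y'))
     = (\<Sum>a1<dL. \<Sum>a2<dL. weyl1 dL (a1, a2) x y * cnj (weyl1 dL (a1, a2) x' y'))"
    by (simp add: sum.cartesian_product)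
  also have "\<dots> = (\<Sum>a1<dL. (if x = (y + a1) mod dL \<and> x' = (y' + a1) mod dL then (if y = y' then of_nat dL else 0) else 0))"
    by (simp only: inner)
  also have "\<dots> = (if x = x' \<and> y = y' then of_nat dL else 0)"
  proof (cases "y = y'")
    case True
    show ?thesis
    proof (cases "x = x'")
      case True2: True
      have "(\<Sum>a1<dL. (if x = (y + a1) mod dL \<and> x' = (y' + a1) mod dL then (if y = y' then of_nat dL else 0) else 0::complex))
          = (\<Sum>a1<dL. (if x = (y + a1) mod dL then of_nat dL else 0::complex))"
        using True True2 by (intro sum.cong) auto
      also have "\<dots> = of_nat dL" using unique_shift[OF assms(1-3), of "of_nat dL"] by simp
      finally show ?thesis using True True2 by simp
    next
      case False
      then show ?thesis using True by (simp add: sum.neutral)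
    qed
  next
    case False
    then show ?thesis by simp
  qed
  finally show ?thesis .
qed


lemma lists_Suc_eq:
  "{a. length a = Suc n \<and> set a \<subseteq> P} = (\<lambda>(p, a). p # a) ` (P \<times> {a. length a = n \<and> set a \<subseteq> P})"
  (is "?L = ?R")
proof
  show "?L \<subseteq> ?R"
  proof
    fix a assume "a \<in> ?L"
    then obtain p a' where "a = p # a'" "length a' = n" "p \<in> P" "set a' \<subseteq> P"
      by (cases a) auto
    then show "a \<in> ?R" by force
  qed
qed auto

lemma sum_lists_prod:
  fixes f :: "nat \<Rightarrow> 'b \<Rightarrow> complex"
  assumes "finite P"
  shows "(\<Sum>a\<in>{a. length a = n \<and> set a \<subseteq> P}. \<Prod>t<n. f t (a ! t)) = (\<Prod>t<n. \<Sum>p\<in>P. f t p)"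
proof (induction n arbitrary: f)
  case 0
  have "{a. length a = 0 \<and> set a \<subseteq> P} = {[]}" by auto
  then show ?case by simp
next
  case (Suc n)
  have inj: "inj_on (\<lambda>(p, a). p # a) (P \<times> {a. length a = n \<and> set a \<subseteq> P})"
    by (auto simp: inj_on_def)
  have fin: "finite {a. length a = n \<and> set a \<subseteq> P}"
    using finite_lists_length_eq[OF assms, of n] by (simp add: conj_commute)
  have "(\<Sum>a\<in>{a. length a = Suc n \<and> set a \<subseteq> P}. \<Prod>t<Suc n. f t (a ! t))
      = (\<Sum>(p, a)\<in>P \<times> {a. length a = n \<and> set a \<subseteq> P}. \<Prod>t<Suc n. f t ((p # a) ! t))"
    unfolding lists_Suc_eq by (subst sum.reindex[OF inj]) (simp add: case_prod_unfold)
  also have "\<dots> = (\<Sum>(p, a)\<in>P \<times> {a. length a = n \<and> set a \<subseteq> P}. f 0 p * (\<Prod>t<n. f (Suc t) (a ! t)))"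
    by (intro sum.cong refl) (auto simp del: prod.lessThan_Suc simp add: prod.lessThan_Suc_shift)
  also have "\<dots> = (\<Sum>p\<in>P. \<Sum>a\<in>{a. length a = n \<and> set a \<subseteq> P}. f 0 p * (\<Prod>t<n. f (Suc t) (a ! t)))"
    by (rule sum.cartesian_product[symmetric])
  also have "\<dots> = (\<Sum>p\<in>P. f 0 p) * (\<Sum>a\<in>{a. length a = n \<and> set a \<subseteq> P}. \<Prod>t<n. f (Suc t) (a ! t))"
    by (rule sum_product[symmetric])
  also have "\<dots> = (\<Sum>p\<in>P. f 0 p) * (\<Prod>t<n. \<Sum>p\<in>P. f (Suc t) p)"
    using Suc.IH[of "\<lambda>t. f (Suc t)"] by simp
  also have "\<dots> = (\<Prod>t<Suc n. \<Sum>p\<in>P. f t p)"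
    by (simp only: prod.lessThan_Suc_shift)
  finally show ?case .
qed

lemma weyl_labels_eq: "weyl_labels dL n = {a. length a = n \<and> set a \<subseteq> {..<dL} \<times> {..<dL}}"
  unfolding weyl_labels_def by (auto simp: mem_Times_iff subset_iff)

lemma finite_weyl_labels: "finite (weyl_labels dL n)"
  unfolding weyl_labels_eq using finite_lists_length_eq[of "{..<dL} \<times> {..<dL}" n]
  by (simp add: conj_commute)

lemma card_weyl_labels: "card (weyl_labels dL n) = (dL ^ n) ^ 2"
  unfolding weyl_labels_eq using card_lists_length_eq[of "{..<dL} \<times> {..<dL}" n]
  by (simp add: conj_commute power2_eq_square power_mult_distrib)

lemma digits_inj_aux:
  fixes dL :: nat
  shows "i < dL ^ n \<Longrightarrow> k < dL ^ n \<Longrightarrow> (\<forall>s<n. (i div dL ^ s) mod dL = (k div dL ^ s) mod dL) \<Longrightarrow> i = k"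
proof (induction n arbitrary: i k)
  case 0
  then show ?case by simp
next
  case (Suc n)
  have pos: "dL > 0" using Suc.prems(1) by (cases "dL = 0") auto
  have m: "i mod dL = k mod dL" using Suc.prems(3)[rule_format, of 0] by simp
  have "i div dL < dL ^ n" using Suc.prems(1) pos by (simp add: div_less_iff_less_mult mult.commute)
  moreover have "k div dL < dL ^ n" using Suc.prems(2) pos by (simp add: div_less_iff_less_mult mult.commute)
  moreover have "\<forall>s<n. (i div dL div dL ^ s) mod dL = (k div dL div dL ^ s) mod dL"
  proof (intro allI impI)
    fix s assume "s < n"
    then show "(i div dL div dL ^ s) mod dL = (k div dL div dL ^ s) mod dL"
      using Suc.prems(3)[rule_format, of "Suc s"] by (simp add: div_mult2_eq)
  qed
  ultimately have "i div dL = k div dL" using Suc.IH by blast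
  then show ?case using m by (metis div_mod_decomp)
qed

lemma digits_inj:
  assumes "i < dL ^ n" "k < dL ^ n" "\<forall>t<n. digit dL n t i = digit dL n t k"
  shows "i = k"
proof (rule digits_inj_aux[OF assms(1,2)], intro allI impI)
  fix s assume s: "s < n"
  then have "digit dL n (n - 1 - s) i = digit dL n (n - 1 - s) k" using assms(3) by simp
  moreover have "n - 1 - (n - 1 - s) = s" using s by simp
  ultimately show "(i div dL ^ s) mod dL = (k div dL ^ s) mod dL" unfolding digit_def by simp
qed

lemma digit_less: "dL \<ge> 1 \<Longrightarrow> digit dL n t i < dL"
  unfolding digit_def by simp

lemma weyl_complete:
  assumes "dL \<ge> 1" "i < dL ^ n" "j < dL ^ n" "k < dL ^ n" "l < dL ^ n"
  shows "(\<Sum>a\<in>weyl_labels dL n. weyl dL n a i j * cnj (weyl dL n a k l))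
       = (if i = k \<and> j = l then of_nat (dL ^ n) else 0)"
proof -
  let ?g = "\<lambda>t p. weyl1 dL p (digit dL n t i) (digit dL n t j) * cnj (weyl1 dL p (digit dL n t k) (digit dL n t l))"
  have "(\<Sum>a\<in>weyl_labels dL n. weyl dL n a i j * cnj (weyl dL n a k l))
      = (\<Sum>a\<in>weyl_labels dL n. \<Prod>t<n. ?g t (a ! t))"
    unfolding weyl_def by (simp add: prod.distrib)
  also have "\<dots> = (\<Prod>t<n. \<Sum>p\<in>{..<dL}\<times>{..<dL}. ?g t p)"
    unfolding weyl_labels_eq by (rule sum_lists_prod) simp
  also have "\<dots> = (\<Prod>t<n. if digit dL n t i = digit dL n t k \<and> digit dL n t j = digit dL n t l then of_nat dL else 0)"
    by (intro prod.cong refl weyl1_complete) (use assms(1) in \<open>auto intro!: digit_less\<close>)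
  also have "\<dots> = (if i = k \<and> j = l then of_nat (dL ^ n) else 0)"
  proof (cases "i = k \<and> j = l")
    case True
    then show ?thesis by simp
  next
    case False
    then obtain t where "t < n" "\<not> (digit dL n t i = digit dL n t k \<and> digit dL n t j = digit dL n t l)"
      using digits_inj[OF assms(2,4)] digits_inj[OF assms(3,5)] by blast
    then show ?thesis using False by (auto simp add: prod_zero_iff)
  qed
  finally show ?thesis .
qed


lemma parseval_gen:
  fixes \<gamma> :: "'x \<Rightarrow> 'p \<Rightarrow> complex" and M :: "'p \<Rightarrow> complex" and K :: real
  assumes "finite I" "finite P"
    and ker: "\<And>p q. p \<in> P \<Longrightarrow> q \<in> P \<Longrightarrow> (\<Sum>x\<in>I. \<gamma> x p * cnj (\<gamma> x q)) = (if p = q then of_real K else 0)"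
  shows "(\<Sum>x\<in>I. (cmod (\<Sum>p\<in>P. \<gamma> x p * M p))^2) = K * (\<Sum>p\<in>P. (cmod (M p))^2)"
proof -
  have "complex_of_real (\<Sum>x\<in>I. (cmod (\<Sum>p\<in>P. \<gamma> x p * M p))^2)
      = (\<Sum>x\<in>I. (\<Sum>p\<in>P. \<gamma> x p * M p) * cnj (\<Sum>q\<in>P. \<gamma> x q * M q))"
    by (simp only: of_real_sum complex_norm_square)
  also have "\<dots> = (\<Sum>x\<in>I. \<Sum>p\<in>P. \<Sum>q\<in>P. (\<gamma> x p * M p) * cnj (\<gamma> x q * M q))"
    by (simp add: sum_product cnj_sum)
  also have "\<dots> = (\<Sum>p\<in>P. \<Sum>q\<in>P. \<Sum>x\<in>I. (\<gamma> x p * M p) * cnj (\<gamma> x q * M q))"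
    by (subst sum.swap) (simp add: sum.swap[of _ I])
  also have "\<dots> = (\<Sum>p\<in>P. \<Sum>q\<in>P. (M p * cnj (M q)) * (\<Sum>x\<in>I. \<gamma> x p * cnj (\<gamma> x q)))"
    by (simp add: sum_distrib_left mult_ac)
  also have "\<dots> = (\<Sum>p\<in>P. \<Sum>q\<in>P. (M p * cnj (M q)) * (if p = q then of_real K else 0))"
    by (intro sum.cong refl) (simp add: ker)
  also have "\<dots> = (\<Sum>p\<in>P. M p * cnj (M p) * of_real K)"
    using assms(2) by (simp add: if_distrib sum.delta cong: if_cong)
  also have "\<dots> = complex_of_real (K * (\<Sum>p\<in>P. (cmod (M p))^2))"
    by (simp only: of_real_mult of_real_sum complex_norm_square sum_distrib_left mult_ac)
  finally show ?thesis by (simp only: of_real_eq_iff)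
qed

lemma trc_expand:
  "mtrace d (mmult d (mmult d (mmult d (madj A) U) B) (madj U))
   = (\<Sum>i<d. \<Sum>l<d. \<Sum>k<d. \<Sum>j<d. cnj (A j i) * B k l * (U j k * cnj (U i l)))"
  unfolding mtrace_def mmult_def madj_def
  by (simp add: sum_distrib_left sum_distrib_right mult_ac)


lemma row_norm:
  assumes "unitary_mat d U" "i < d"
  shows "(\<Sum>l<d. (cmod (U i l))^2) = 1"
proof -
  have "mmult d U (madj U) i i = 1" using assms unfolding unitary_mat_def by simp
  then have "(\<Sum>l<d. U i l * cnj (U i l)) = 1" unfolding mmult_def madj_def by simp
  then have "complex_of_real (\<Sum>l<d. (cmod (U i l))^2) = 1"
    by (simp only: of_real_sum complex_norm_square)
  then show ?thesis by (metis of_real_1 of_real_eq_iff)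
qed

lemma col_norm:
  assumes "unitary_mat d U" "k < d"
  shows "(\<Sum>j<d. (cmod (U j k))^2) = 1"
proof -
  have "mmult d (madj U) U k k = 1" using assms unfolding unitary_mat_def by simp
  then have "(\<Sum>j<d. U j k * cnj (U j k)) = 1" unfolding mmult_def madj_def by (simp add: mult.commute)
  then have "complex_of_real (\<Sum>j<d. (cmod (U j k))^2) = 1"
    by (simp only: of_real_sum complex_norm_square)
  then show ?thesis by (metis of_real_1 of_real_eq_iff)
qed

lemma total_sq:
  fixes U :: "nat \<Rightarrow> nat \<Rightarrow> complex"
  assumes dL: "dL \<ge> 1" and U: "unitary_mat (dL ^ n) U"
  shows "(\<Sum>(a, b)\<in>weyl_labels dL n \<times> weyl_labels dL n.
           (cmod (mtrace (dL ^ n) (mmult (dL ^ n) (mmult (dL ^ n) (mmult (dL ^ n) (madj (weyl dL n a)) U) (weyl dL n b)) (madj U))))^2)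
         = real (dL ^ n) ^ 4"
proof -
  define d where "d = dL ^ n"
  define L where "L = weyl_labels dL n"
  define Q where "Q = {..<d} \<times> {..<d} \<times> {..<d} \<times> {..<d}"
  define \<gamma> :: "(nat \<times> nat) list \<times> (nat \<times> nat) list \<Rightarrow> nat \<times> nat \<times> nat \<times> nat \<Rightarrow> complex"
    where "\<gamma> = (\<lambda>(a, b) (i, l, k, j). cnj (weyl dL n a j i) * weyl dL n b k l)"
  define M :: "nat \<times> nat \<times> nat \<times> nat \<Rightarrow> complex"
    where "M = (\<lambda>(i, l, k, j). U j k * cnj (U i l))"
  have cexp: "mtrace d (mmult d (mmult d (mmult d (madj (weyl dL n a)) U) (weyl dL n b)) (madj U))
      = (\<Sum>q\<in>Q. \<gamma> (a, b) q * M q)" for a b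
    unfolding trc_expand Q_def \<gamma>_def M_def
    by (simp add: sum.cartesian_product mult_ac) (rule sum.cong[OF refl], clarsimp simp: mult_ac)
  have ker: "(\<Sum>x\<in>L \<times> L. \<gamma> x p * cnj (\<gamma> x q)) = (if p = q then of_real (real d ^ 2) else 0)"
    if "p \<in> Q" "q \<in> Q" for p q
  proof -
    obtain i l k j where p: "p = (i, l, k, j)" by (cases p) auto
    obtain i' l' k' j' where q: "q = (i', l', k', j')" by (cases q) auto
    have b: "i < d" "l < d" "k < d" "j < d" "i' < d" "l' < d" "k' < d" "j' < d"
      using that p q unfolding Q_def by auto
    have "(\<Sum>x\<in>L \<times> L. \<gamma> x p * cnj (\<gamma> x q))
        = (\<Sum>(a, b)\<in>L \<times> L. (weyl dL n a j' i' * cnj (weyl dL n a j i)) * (weyl dL n b k l * cnj (weyl dL n b k' l')))"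
      by (rule sum.cong[OF refl]) (clarsimp simp: p q \<gamma>_def mult_ac)
    also have "\<dots> = (\<Sum>a\<in>L. \<Sum>b\<in>L. (weyl dL n a j' i' * cnj (weyl dL n a j i)) * (weyl dL n b k l * cnj (weyl dL n b k' l')))"
      by (rule sum.cartesian_product[symmetric])
    also have "\<dots> = (\<Sum>a\<in>L. weyl dL n a j' i' * cnj (weyl dL n a j i)) * (\<Sum>b\<in>L. weyl dL n b k l * cnj (weyl dL n b k' l'))"
      by (rule sum_product[symmetric])
    also have "\<dots> = (if j' = j \<and> i' = i then of_nat d else 0) * (if k = k' \<and> l = l' then of_nat d else 0)"
      unfolding L_def d_def using b unfolding d_def by (simp add: weyl_complete[OF dL])
    also have "\<dots> = (if p = q then of_real (real d ^ 2) else 0)"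
      unfolding p q by (auto simp: power2_eq_square)
    finally show ?thesis .
  qed
  have "(\<Sum>(a, b)\<in>L \<times> L. (cmod (mtrace d (mmult d (mmult d (mmult d (madj (weyl dL n a)) U) (weyl dL n b)) (madj U))))^2)
      = (\<Sum>x\<in>L \<times> L. (cmod (\<Sum>q\<in>Q. \<gamma> x q * M q))^2)"
    by (simp add: cexp case_prod_beta)
  also have "\<dots> = real d ^ 2 * (\<Sum>q\<in>Q. (cmod (M q))^2)"
    by (rule parseval_gen[OF _ _ ker]) (auto simp: L_def Q_def finite_weyl_labels)
  also have "(\<Sum>q\<in>Q. (cmod (M q))^2) = (\<Sum>i<d. \<Sum>l<d. \<Sum>k<d. \<Sum>j<d. (cmod (U j k))^2 * (cmod (U i l))^2)"
    unfolding Q_def M_def by (simp add: sum.cartesian_product) (rule sum.cong[OF refl], clarsimp simp: norm_mult power_mult_distrib)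
  also have "\<dots> = (\<Sum>i<d. \<Sum>l<d. (cmod (U i l))^2 * (\<Sum>k<d. \<Sum>j<d. (cmod (U j k))^2))"
    by (simp add: sum_distrib_left sum_distrib_right mult_ac)
  also have "\<dots> = real d * real d"
    using row_norm[OF U[folded d_def]] col_norm[OF U[folded d_def]]
    by (simp add: sum_distrib_right[symmetric])
  finally show ?thesis unfolding d_def L_def by (simp add: power2_eq_square power4_eq_xxxx)
qed


lemma weyl_a0:
  assumes "dL \<ge> 1" "i < dL ^ n" "j < dL ^ n"
  shows "weyl dL n (replicate n (0, 0)) i j = (if i = j then 1 else 0)"
proof -
  have "weyl dL n (replicate n (0, 0)) i j = (\<Prod>t<n. if digit dL n t i = digit dL n t j then 1 else 0)"
    unfolding weyl_def
    by (intro prod.cong refl) (simp add: weyl1_def digit_def)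
  also have "\<dots> = (if i = j then 1 else 0)"
  proof (cases "i = j")
    case True then show ?thesis by simp
  next
    case False
    then obtain t where "t < n" "digit dL n t i \<noteq> digit dL n t j"
      using digits_inj[OF assms(2,3)] by blast
    then show ?thesis using False by (auto simp: prod_zero_iff)
  qed
  finally show ?thesis .
qed

lemma weyl_b0_diag:
  assumes "dL \<ge> 2" "n \<ge> 1"
  shows "weyl dL n ((1, 0) # replicate (n - 1) (0, 0)) k k = 0"
proof -
  define x where "x = digit dL n 0 k"
  have x: "x < dL" unfolding x_def using assms(1) by (intro digit_less) simp
  have "x \<noteq> (x + 1) mod dL"
  proof (cases "x + 1 < dL")
    case True then show ?thesis by simp
  next
    case False
    then have "x + 1 = dL" using x by simp
    then show ?thesis using assms(1) by simp
  qed
  then have "weyl1 dL (((1, 0) # replicate (n - 1) (0, 0)) ! 0) (digit dL n 0 k) (digit dL n 0 k) = 0"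
    unfolding weyl1_def x_def by simp
  then show ?thesis unfolding weyl_def using assms(2)
    by (subst prod_zero_iff) (auto intro!: bexI[of _ 0])
qed

lemma trc_a0:
  fixes U :: "nat \<Rightarrow> nat \<Rightarrow> complex"
  assumes dL: "dL \<ge> 1" and U: "unitary_mat (dL ^ n) U"
  shows "mtrace (dL ^ n) (mmult (dL ^ n) (mmult (dL ^ n) (mmult (dL ^ n) (madj (weyl dL n (replicate n (0, 0)))) U) B) (madj U))
       = (\<Sum>l<dL ^ n. B l l)"
proof -
  define d where "d = dL ^ n"
  have w: "i < d \<Longrightarrow> j < d \<Longrightarrow> weyl dL n (replicate n (0, 0)) j i = (if j = i then 1 else 0)" for i j
    using weyl_a0[OF dL] unfolding d_def by simp
  have uu: "l < d \<Longrightarrow> k < d \<Longrightarrow> (\<Sum>i<d. cnj (U i l) * U i k) = (if l = k then 1 else 0)" for l k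
    using U unfolding unitary_mat_def mmult_def madj_def d_def by simp
  have "mtrace d (mmult d (mmult d (mmult d (madj (weyl dL n (replicate n (0, 0)))) U) B) (madj U))
     = (\<Sum>i<d. \<Sum>l<d. \<Sum>k<d. \<Sum>j<d. cnj (weyl dL n (replicate n (0, 0)) j i) * B k l * (U j k * cnj (U i l)))"
    by (rule trc_expand)
  also have "\<dots> = (\<Sum>i<d. \<Sum>l<d. \<Sum>k<d. B k l * (U i k * cnj (U i l)))"
  proof (intro sum.cong refl)
    fix i l k assume "i \<in> {..<d}"
    then have "i < d" by simp
    then show "(\<Sum>j<d. cnj (weyl dL n (replicate n (0, 0)) j i) * B k l * (U j k * cnj (U i l)))
       = B k l * (U i k * cnj (U i l))"
    proof -
      have "(\<Sum>j<d. cnj (weyl dL n (replicate n (0, 0)) j i) * B k l * (U j k * cnj (U i l)))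
          = (\<Sum>j<d. if j = i then B k l * (U j k * cnj (U i l)) else 0)"
        using \<open>i < d\<close> by (intro sum.cong refl) (simp add: w)
      also have "\<dots> = B k l * (U i k * cnj (U i l))" using \<open>i < d\<close> by simp
      finally show ?thesis .
    qed
  qed
  also have "\<dots> = (\<Sum>l<d. \<Sum>k<d. \<Sum>i<d. B k l * (U i k * cnj (U i l)))"
    by (subst sum.swap) (rule sum.cong[OF refl], rule sum.swap)
  also have "\<dots> = (\<Sum>l<d. \<Sum>k<d. B k l * (\<Sum>i<d. cnj (U i l) * U i k))"
    by (simp add: sum_distrib_left mult_ac)
  also have "\<dots> = (\<Sum>l<d. \<Sum>k<d. B k l * (if l = k then 1 else 0))"
    by (intro sum.cong refl) (simp add: uu)
  also have "\<dots> = (\<Sum>l<d. B l l)"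
    by (simp add: if_distrib cong: if_cong)
  finally show ?thesis unfolding d_def .
qed


lemma final_arith:
  fixes D A :: real
  assumes D: "D \<ge> 4" and cs: "(D^2 - D)^2 \<le> A * (D^2 - 2)"
  shows "2 / (D + 1) < (D^2 + A) / D^3"
proof -
  have "D * D \<ge> 4 * 4" using D by (intro mult_mono) auto
  then have p: "D^2 - 2 > 0" by (simp add: power2_eq_square)
  have "(A * (D + 1) - D^2 * (D - 1)) * (D^2 - 2) = A * (D^2 - 2) * (D + 1) - D^2 * (D - 1) * (D^2 - 2)"
    by (simp add: algebra_simps)
  also have "\<dots> \<ge> (D^2 - D)^2 * (D + 1) - D^2 * (D - 1) * (D^2 - 2)"
    using cs D by (intro diff_right_mono mult_right_mono) auto
  also have "(D^2 - D)^2 * (D + 1) - D^2 * (D - 1) * (D^2 - 2) = D^2 * (D - 1)"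
    by (simp add: algebra_simps power2_eq_square power3_eq_cube)
  finally have "(A * (D + 1) - D^2 * (D - 1)) * (D^2 - 2) \<ge> D^2 * (D - 1)" .
  moreover have "D^2 * (D - 1) > 0" using D by simp
  ultimately have "(A * (D + 1) - D^2 * (D - 1)) * (D^2 - 2) > 0" by linarith
  then have g: "A * (D + 1) - D^2 * (D - 1) > 0" using p by (simp add: zero_less_mult_iff)
  have "2 * D^3 < (D^2 + A) * (D + 1)" using g by (simp add: algebra_simps power2_eq_square power3_eq_cube)
  then show ?thesis using D by (simp add: divide_simps)
qed

theorem theorem5:
  fixes dL n :: nat and U :: "nat \<Rightarrow> nat \<Rightarrow> complex"
  assumes "dL \<ge> 2" and "n \<ge> 1"
    and "unitary_mat (dL ^ n) U"
  shows "H2 dL n U < 1 - 2 / (real (dL ^ n) ^ 2 + 1)"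
proof -
  have dL1: "dL \<ge> 1" using assms(1) by simp
  define d where "d = dL ^ n"
  define L where "L = weyl_labels dL n"
  define c where "c = (\<lambda>(a, b). cmod (mtrace d (mmult d (mmult d (mmult d (madj (weyl dL n a)) U) (weyl dL n b)) (madj U))))"
  define a0 :: "(nat \<times> nat) list" where "a0 = replicate n (0, 0)"
  define b0 :: "(nat \<times> nat) list" where "b0 = (1, 0) # replicate (n - 1) (0, 0)"
  have d2: "d \<ge> 2"
  proof -
    have "dL ^ 1 \<le> dL ^ n" using assms(1,2) by (intro power_increasing) auto
    then show ?thesis using assms(1) unfolding d_def by simp
  qed
  have a0L: "a0 \<in> L" unfolding a0_def L_def weyl_labels_def using assms(1) by auto
  have b0L: "b0 \<in> L" unfolding b0_def L_def weyl_labels_def using assms(1,2) by auto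
  have ab: "a0 \<noteq> b0"
  proof
    assume "a0 = b0"
    then have "a0 ! 0 = b0 ! 0" by simp
    then show False unfolding a0_def b0_def using assms(2) by simp
  qed
  have c00: "c (a0, a0) = real d"
  proof -
    have "c (a0, a0) = cmod (\<Sum>l<d. weyl dL n a0 l l)"
      unfolding c_def a0_def d_def by (simp add: trc_a0[OF dL1 assms(3)])
    also have "(\<Sum>l<d. weyl dL n a0 l l) = (\<Sum>l<d. 1)"
      unfolding a0_def d_def by (intro sum.cong refl) (simp add: weyl_a0[OF dL1])
    finally show ?thesis by simp
  qed
  have c0b: "c (a0, b0) = 0"
  proof -
    have "c (a0, b0) = cmod (\<Sum>l<d. weyl dL n b0 l l)"
      unfolding c_def a0_def d_def by (simp add: trc_a0[OF dL1 assms(3)])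
    also have "(\<Sum>l<d. weyl dL n b0 l l) = 0"
      unfolding b0_def using weyl_b0_diag[OF assms(1,2)] by simp
    finally show ?thesis by simp
  qed
  define I where "I = L \<times> L"
  define E where "E = {(a0, a0), (a0, b0)}"
  have finI: "finite I" unfolding I_def L_def by (simp add: finite_weyl_labels)
  have EI: "E \<subseteq> I" unfolding E_def I_def using a0L b0L by auto
  have cardI: "card I = d ^ 4" unfolding I_def L_def d_def
    by (simp add: card_cartesian_product card_weyl_labels power2_eq_square power4_eq_xxxx)
  have cardE: "card E = 2" unfolding E_def using ab by simp
  have cardIE: "card (I - E) = d ^ 4 - 2" using card_Diff_subset[of E I] EI cardI cardE
    by (simp add: E_def)
  have T: "(\<Sum>x\<in>I. (c x)^2) = real d ^ 4"
    using total_sq[OF dL1 assms(3)] unfolding I_def L_def c_def d_def by (simp add: case_prod_unfold)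
  have sumE: "(\<Sum>x\<in>E. f x) = f (a0, a0) + f (a0, b0)" for f :: "_ \<Rightarrow> real"
    unfolding E_def using ab by simp
  have T2: "(\<Sum>x\<in>I - E. (c x)^2) = real d ^ 4 - real d ^ 2"
    using sum.subset_diff[OF EI finI, of "\<lambda>x. (c x)^2"] T sumE[of "\<lambda>x. (c x)^2"] c00 c0b by simp
  have S: "(\<Sum>x\<in>I. (c x)^4) = real d ^ 4 + (\<Sum>x\<in>I - E. (c x)^4)"
    using sum.subset_diff[OF EI finI, of "\<lambda>x. (c x)^4"] sumE[of "\<lambda>x. (c x)^4"] c00 c0b by simp
  have cs: "(\<Sum>x\<in>I - E. (c x)^2)^2 \<le> (\<Sum>x\<in>I - E. ((c x)^2)^2) * real (card (I - E))"
    by (rule sum_squared_le_sum_of_squares)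
  have d4: "d ^ 4 \<ge> 2" using d2 by (metis le_trans one_le_numeral power_increasing self_le_power zero_less_numeral le_numeral_extra(4) numeral_le_iff semiring_norm(69))
  have cs2: "((real d ^ 2)^2 - real d ^ 2)^2 \<le> (\<Sum>x\<in>I - E. (c x)^4) * ((real d ^ 2)^2 - 2)"
    using cs unfolding T2 cardIE using d4
    by (simp add: of_nat_diff power_mult[symmetric])
  have H: "H2 dL n U = 1 - 1 / real d ^ 6 * (\<Sum>x\<in>I. (c x)^4)"
    unfolding H2_def Let_def d_def[symmetric] I_def L_def[symmetric] c_def
    by (simp add: sum.cartesian_product case_prod_unfold)
  have D4: "real d ^ 2 \<ge> 4" using d2
    by (metis of_nat_le_iff of_nat_numeral numeral_le_iff power2_nat_le_eq_le power_mono zero_le_numeral semiring_norm(69) le_num_simps(2) one_le_numeral num_double power2_eq_square numeral_times_numeral)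
  have fa: "2 / (real d ^ 2 + 1) < ((real d ^ 2)^2 + (\<Sum>x\<in>I - E. (c x)^4)) / (real d ^ 2)^3"
    by (rule final_arith[OF D4 cs2])
  show ?thesis unfolding H S d_def[symmetric] using fa
    by (simp add: power_mult[symmetric])
qed

end
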